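(* Let $\Gamma$ be a pointclass defined for Polish spaces which is closed under continuous preimages. Let $x\in S^1$, $\overline{x}=(x,x,\ldots)\in T^\infty=\prod_{\omega}S^1$, and identify $\pi_1(T^\infty,\overline{x})$ with $\prod_\omega\mathbb{Z}$ via $\pi_1(T^\infty,\overline x)\cong\prod_\omega\pi_1(S^1,x)$ and a fixed generator of $\pi_1(S^1,x)\cong\mathbb{Z}$. Then a subgroup $G\le\prod_\omega\mathbb{Z}$ is in $\Gamma$ as a subset of the Polish group $\prod_\omega\mathbb{Z}$ (product of discrete groups) if and only if $G$ is $\Gamma$ as a subgroup of $\pi_1(T^\infty,\overline{x})$.
   Context: For a path connected Polish space $(X,d)$ and $x\in X$, $L_x$ is the Polish space of loops at $x$ with metric $\sup_s d(l_0(s),l_1(s))$. A subgroup $G\le\pi_1(X,x)$ is $\Gamma$ if the set of loops in $L_x$ whose homotopy classes lie in $G$ belongs to $\Gamma$ in $L_x$. *)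

theory Defs
  imports "HOL-Analysis.Analysis"
begin

text \<open>The infinite torus T^infinity = prod_omega S^1, realised inside the Polish space
  nat => complex (product topology; Function_Metric supplies a compatible metric dist).\<close>
definition torus_inf :: "(nat \<Rightarrow> complex) set" where
  "torus_inf = {a. \<forall>n. a n \<in> sphere 0 1}"

text \<open>Loops in X based at b, parametrised by [0,1]; outside [0,1] normalised to b,
  so that the sup-distance below is a genuine metric.\<close>
definition loops_at :: "'a::metric_space set \<Rightarrow> 'a \<Rightarrow> (real \<Rightarrow> 'a) set" where
  "loops_at X b = {l. path l \<and> path_image l \<subseteq> X \<and> pathstart l = b \<and> pathfinish l = b
                      \<and> (\<forall>s. s \<notin> {0..1} \<longrightarrow> l s = b)}"

definition loop_dist :: "(real \<Rightarrow> 'a::metric_space) \<Rightarrow> (real \<Rightarrow> 'a) \<Rightarrow> real" where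
  "loop_dist l m = (SUP s\<in>{0..1}. dist (l s) (m s))"

definition loop_space :: "'a::metric_space set \<Rightarrow> 'a \<Rightarrow> (real \<Rightarrow> 'a) topology" where
  "loop_space X b = Metric_space.mtopology (loops_at X b) loop_dist"

text \<open>The standard loop in T^infinity at (x,x,...) representing v in prod_omega Z:
  coordinatewise v n times the fixed generator s |-> x * exp(2 pi i s) of pi_1(S^1,x).\<close>
definition std_loop :: "complex \<Rightarrow> (nat \<Rightarrow> int) \<Rightarrow> real \<Rightarrow> nat \<Rightarrow> complex" where
  "std_loop x v = (\<lambda>s. if s \<in> {0..1} then (\<lambda>n. x * exp (2 * of_real pi * \<i> * of_int (v n) * of_real s))
                        else (\<lambda>n. x))"

definition preimage_closed :: "'a topology \<Rightarrow> 'b topology \<Rightarrow> 'a set set \<Rightarrow> 'b set set \<Rightarrow> bool" where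
  "preimage_closed X Y GX GY \<longleftrightarrow>
     (\<forall>f. continuous_map X Y f \<longrightarrow> (\<forall>A\<in>GY. {p \<in> topspace X. f p \<in> A} \<in> GX))"

definition int_seq_subgroup :: "(nat \<Rightarrow> int) set \<Rightarrow> bool" where
  "int_seq_subgroup G \<longleftrightarrow> (\<lambda>n. 0) \<in> G \<and> (\<forall>a\<in>G. \<forall>b\<in>G. (\<lambda>n. a n + b n) \<in> G)
      \<and> (\<forall>a\<in>G. (\<lambda>n. - a n) \<in> G)"

end

theory Submission
  imports Defs "HOL-Complex_Analysis.Complex_Analysis"
begin

lemma summable_half_min:
  "summable (\<lambda>n. (1/2::real)^n * min (d n) 1)" if "\<And>n. 0 \<le> d n" for d :: "nat \<Rightarrow> real"
  by (rule summable_comparison_test'[of "\<lambda>n. (1/2::real)^n"]) (auto simp: summable_geometric_iff that)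

lemma dist_fun_le2: "dist (a::nat\<Rightarrow>complex) b \<le> 2"
proof -
  have "dist a b = (\<Sum>n. (1/2::real)^n * min (dist (a (from_nat n)) (b (from_nat n))) 1)"
    unfolding dist_fun_def by simp
  also have "\<dots> \<le> (\<Sum>n. (1/2::real)^n)"
    by (rule suminf_le) (auto intro: summable_half_min simp: summable_geometric_iff)
  also have "\<dots> = 2" using suminf_geometric[of "1/2::real"] by simp
  finally show ?thesis .
qed

lemma dist_fun_ge_coord:
  "(1/2::real)^(to_nat n) * min (dist (a n) (b n)) 1 \<le> dist (a::nat\<Rightarrow>complex) b"
proof -
  let ?f = "\<lambda>k. (1/2::real)^k * min (dist (a (from_nat k)) (b (from_nat k))) 1"
  have "sum ?f {to_nat n} \<le> suminf ?f"
    by (rule sum_le_suminf) (auto intro: summable_half_min)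
  then show ?thesis unfolding dist_fun_def by simp
qed

lemma ld_bdd: "bdd_above ((\<lambda>s. dist (l s) (m s)) ` {0..1::real})" for l m :: "real \<Rightarrow> nat \<Rightarrow> complex"
  by (rule bdd_aboveI[of _ 2]) (auto simp: dist_fun_le2)

lemma ld_ge: "s \<in> {0..1} \<Longrightarrow> dist (l s) (m s) \<le> loop_dist l m" for l m :: "real \<Rightarrow> nat \<Rightarrow> complex"
  unfolding loop_dist_def by (rule cSUP_upper[OF _ ld_bdd])

lemma ld_le: "(\<And>s. s \<in> {0..1} \<Longrightarrow> dist (l s) (m s) \<le> c) \<Longrightarrow> loop_dist l m \<le> c" for l m :: "real \<Rightarrow> nat \<Rightarrow> complex"
  unfolding loop_dist_def by (rule cSUP_least) auto

lemma ld_metric: "Metric_space (loops_at X b) (loop_dist :: (real \<Rightarrow> nat \<Rightarrow> complex) \<Rightarrow> _)"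
proof
  fix l m :: "real \<Rightarrow> nat \<Rightarrow> complex"
  show "0 \<le> loop_dist l m" using ld_ge[of 0 l m] by (smt (verit) atLeastAtMost_iff zero_le_dist)
  show "loop_dist l m = loop_dist m l" unfolding loop_dist_def by (simp add: dist_commute)
next
  fix l m :: "real \<Rightarrow> nat \<Rightarrow> complex"
  assume l: "l \<in> loops_at X b" and m: "m \<in> loops_at X b"
  show "loop_dist l m = 0 \<longleftrightarrow> l = m"
  proof
    assume 0: "loop_dist l m = 0"
    show "l = m"
    proof
      fix s
      show "l s = m s"
      proof (cases "s \<in> {0..1}")
        case True then show ?thesis using ld_ge[OF True, of l m] 0 by simp
      next
        case False then show ?thesis using l m by (simp add: loops_at_def)
      qed
    qed
  next
    assume "l = m" then show "loop_dist l m = 0"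
      using ld_le[of l m 0] ld_ge[of 0 l m] by force
  qed
next
  fix l m n :: "real \<Rightarrow> nat \<Rightarrow> complex"
  show "loop_dist l n \<le> loop_dist l m + loop_dist m n"
    by (rule ld_le) (smt (verit) dist_triangle ld_ge)
qed


definition wn :: "(real \<Rightarrow> nat \<Rightarrow> complex) \<Rightarrow> nat \<Rightarrow> int" where
  "wn l n = \<lfloor>Re (winding_number (\<lambda>s. l s n) 0)\<rfloor>"

lemma loop_coord:
  assumes l: "l \<in> loops_at torus_inf b" and b: "b \<in> torus_inf"
  shows "path (\<lambda>s. l s n)" "pathfinish (\<lambda>s. l s n) = pathstart (\<lambda>s. l s n)"
    "\<And>s. l s n \<in> sphere 0 1" "0 \<notin> path_image (\<lambda>s. l s n)"
proof -
  have p: "path l" and im: "path_image l \<subseteq> torus_inf" and st: "pathstart l = b"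
    and fi: "pathfinish l = b" and out: "\<And>s. s \<notin> {0..1} \<Longrightarrow> l s = b"
    using l by (auto simp: loops_at_def)
  show "path (\<lambda>s. l s n)" using p unfolding path_def
    by (rule continuous_on_product_then_coordinatewise)
  show "pathfinish (\<lambda>s. l s n) = pathstart (\<lambda>s. l s n)"
    using st fi by (simp add: pathstart_def pathfinish_def)
  have all: "l s \<in> torus_inf" for s
    using im out[of s] b by (cases "s \<in> {0..1}") (auto simp: path_image_def)
  then show sph: "\<And>s. l s n \<in> sphere 0 1" by (simp add: torus_inf_def)
  show "0 \<notin> path_image (\<lambda>s. l s n)"
  proof
    assume "0 \<in> path_image (\<lambda>s. l s n)"
    then obtain s where "l s n = 0" by (auto simp: path_image_def)
    then show False using sph[of s] by simp
  qed
qed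

lemma wn_int:
  assumes l: "l \<in> loops_at torus_inf b" and b: "b \<in> torus_inf"
  shows "winding_number (\<lambda>s. l s n) 0 = of_int (wn l n)"
proof -
  have "winding_number (\<lambda>s. l s n) 0 \<in> \<int>"
    using loop_coord[OF l b] by (intro integer_winding_number) auto
  then obtain k where k: "winding_number (\<lambda>s. l s n) 0 = of_int k" by (auto elim: Ints_cases)
  then show ?thesis by (simp add: wn_def)
qed

lemma const_torus: "x \<in> sphere 0 1 \<Longrightarrow> (\<lambda>n. x) \<in> torus_inf"
  by (simp add: torus_inf_def)

lemma std_in:
  assumes x: "x \<in> sphere 0 1"
  shows "std_loop x v \<in> loops_at torus_inf (\<lambda>n. x)"
proof -
  have "continuous_on {0..1} (\<lambda>s. \<lambda>n. x * exp (2 * of_real pi * \<i> * of_int (v n) * of_real s))"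
    by (intro continuous_intros)
  then have "path (std_loop x v)" unfolding path_def
    by (rule continuous_on_eq) (simp add: std_loop_def)
  moreover have "std_loop x v s \<in> torus_inf" for s
    using x by (auto simp: std_loop_def torus_inf_def norm_mult norm_exp_eq_Re)
  then have "path_image (std_loop x v) \<subseteq> torus_inf" by (auto simp: path_image_def)
  moreover have e1: "exp (2 * of_real pi * \<i> * of_int k) = 1" for k :: int
    using exp_integer_2pi[of "of_int k"] by (simp add: mult_ac)
  moreover have "pathstart (std_loop x v) = (\<lambda>n. x)" by (simp add: pathstart_def std_loop_def)
  moreover have "pathfinish (std_loop x v) = (\<lambda>n. x)" by (simp add: pathfinish_def std_loop_def e1)
  moreover have "\<forall>s. s \<notin> {0..1} \<longrightarrow> std_loop x v s = (\<lambda>n. x)" by (simp add: std_loop_def)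
  ultimately show ?thesis by (simp add: loops_at_def)
qed

lemma wn_std_wn:
  assumes x: "x \<in> sphere 0 1"
  shows "winding_number (\<lambda>s. std_loop x v s n) 0 = of_int (v n)"
proof -
  have x0: "x \<noteq> 0" using x by auto
  define p where "p = (\<lambda>s. if s \<in> {0..1} then Ln x + 2 * of_real pi * \<i> * of_int (v n) * of_real s else Ln x)"
  have "continuous_on {0..1} (\<lambda>s. Ln x + 2 * of_real pi * \<i> * of_int (v n) * of_real s)"
    by (intro continuous_intros)
  then have pp: "path p" unfolding path_def
    by (rule continuous_on_eq) (simp add: p_def)
  have e: "exp \<circ> p = (\<lambda>s. std_loop x v s n)"
    by (auto simp: p_def std_loop_def exp_add x0 fun_eq_iff)
  have "winding_number (exp \<circ> p) 0 = (pathfinish p - pathstart p) / (2 * of_real pi * \<i>)"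
    by (rule winding_number_compose_exp[OF pp])
  also have "\<dots> = of_int (v n)" by (simp add: p_def pathstart_def pathfinish_def)
  finally show ?thesis using e by simp
qed

lemma wn_std:
  assumes x: "x \<in> sphere 0 1"
  shows "wn (std_loop x v) n = v n"
  using wn_int[OF std_in[OF x] const_torus[OF x], where n=n] wn_std_wn[OF x, where v=v and n=n] by simp


lemma hom_iff:
  assumes x: "x \<in> sphere 0 1" and l: "l \<in> loops_at torus_inf (\<lambda>n. x)"
  shows "homotopic_loops torus_inf l (std_loop x v) \<longleftrightarrow> (\<forall>n. wn l n = v n)"
proof
  assume h: "homotopic_loops torus_inf l (std_loop x v)"
  show "\<forall>n. wn l n = v n"
  proof
    fix n
    have "homotopic_loops (sphere 0 1) ((\<lambda>a. a n) \<circ> l) ((\<lambda>a. a n) \<circ> std_loop x v)"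
      by (rule homotopic_loops_continuous_image[OF h])
        (auto simp: torus_inf_def intro: continuous_on_subset[OF continuous_on_product_coordinates])
    then have "homotopic_loops (-{0}) ((\<lambda>a. a n) \<circ> l) ((\<lambda>a. a n) \<circ> std_loop x v)"
      by (rule homotopic_loops_subset) auto
    then have "winding_number (\<lambda>s. l s n) 0 = winding_number (\<lambda>s. std_loop x v s n) 0"
      using winding_number_homotopic_loops by (simp add: o_def)
    then show "wn l n = v n"
      using wn_int[OF l const_torus[OF x], where n=n] wn_std_wn[OF x, where v=v and n=n] by simp
  qed
next
  assume w: "\<forall>n. wn l n = v n"
  have sl: "std_loop x v \<in> loops_at torus_inf (\<lambda>n. x)" by (rule std_in[OF x])
  have "homotopic_loops (sphere 0 1) (\<lambda>s. l s n) (\<lambda>s. std_loop x v s n)" for n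
  proof -
    note L = loop_coord[OF l const_torus[OF x], where n=n]
    note S = loop_coord[OF sl const_torus[OF x], where n=n]
    have "winding_number (\<lambda>s. l s n) 0 = winding_number (\<lambda>s. std_loop x v s n) 0"
      using wn_int[OF l const_torus[OF x], where n=n] wn_std_wn[OF x, where v=v and n=n] w by simp
    then have h0: "homotopic_loops (-{0}) (\<lambda>s. l s n) (\<lambda>s. std_loop x v s n)"
      using winding_number_homotopic_loops_eq[of "\<lambda>s. l s n" 0 "\<lambda>s. std_loop x v s n"] L S by simp
    define r where "r = (\<lambda>z::complex. z / of_real (norm z))"
    have "homotopic_loops (sphere 0 1) (r \<circ> (\<lambda>s. l s n)) (r \<circ> (\<lambda>s. std_loop x v s n))"
      by (rule homotopic_loops_continuous_image[OF h0]) (auto simp: r_def norm_divide intro!: continuous_intros)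
    moreover have "r \<circ> (\<lambda>s. l s n) = (\<lambda>s. l s n)" using L(3) by (auto simp: r_def fun_eq_iff)
    moreover have "r \<circ> (\<lambda>s. std_loop x v s n) = (\<lambda>s. std_loop x v s n)" using S(3) by (auto simp: r_def fun_eq_iff)
    ultimately show ?thesis by simp
  qed
  then have "\<forall>n. \<exists>h. continuous_on ({0..1::real} \<times> {0..1}) h \<and>
          h \<in> ({0..1} \<times> {0..1}) \<rightarrow> sphere 0 1 \<and>
          (\<forall>y \<in> {0..1}. h(0,y) = l y n) \<and>
          (\<forall>y \<in> {0..1}. h(1,y) = std_loop x v y n) \<and>
          (\<forall>t \<in> {0..1}. pathfinish(h \<circ> Pair t) = pathstart(h \<circ> Pair t))"
    unfolding homotopic_loops by blast
  then obtain hh where hh: "\<And>n. continuous_on ({0..1::real} \<times> {0..1}) (hh n) \<and>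
          hh n \<in> ({0..1} \<times> {0..1}) \<rightarrow> sphere 0 1 \<and>
          (\<forall>y \<in> {0..1}. hh n (0,y) = l y n) \<and>
          (\<forall>y \<in> {0..1}. hh n (1,y) = std_loop x v y n) \<and>
          (\<forall>t \<in> {0..1}. pathfinish(hh n \<circ> Pair t) = pathstart(hh n \<circ> Pair t))"
    by metis
  show "homotopic_loops torus_inf l (std_loop x v)"
    unfolding homotopic_loops
  proof (intro exI conjI ballI)
    let ?H = "\<lambda>z n. hh n z"
    show "continuous_on ({0..1::real} \<times> {0..1}) ?H"
      using hh by (intro continuous_on_coordinatewise_then_product) blast
    show "?H \<in> ({0..1} \<times> {0..1}) \<rightarrow> torus_inf"
      using hh by (auto simp: torus_inf_def Pi_def)
    show "?H (0, y) = l y" if "y \<in> {0..1}" for y using hh that by auto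
    show "?H (1, y) = std_loop x v y" if "y \<in> {0..1}" for y using hh that by auto
    show "pathfinish (?H \<circ> Pair t) = pathstart (?H \<circ> Pair t)" if "t \<in> {0..1}" for t
      using hh that by (auto simp: pathfinish_def pathstart_def fun_eq_iff)
  qed
qed


lemma cont_f:
  assumes x: "x \<in> sphere 0 1"
  shows "continuous_map (loop_space torus_inf (\<lambda>n. x)) (euclidean :: (nat \<Rightarrow> int) topology) (\<lambda>l n. wn l n)"
proof -
  interpret M: Metric_space "loops_at torus_inf (\<lambda>n. x)" loop_dist by (rule ld_metric)
  have "continuous_map M.mtopology (euclidean :: int topology) (\<lambda>l. wn l n)" for n
    unfolding continuous_map_def
  proof (intro conjI allI impI)
    show "(\<lambda>l. wn l n) \<in> topspace M.mtopology \<rightarrow> topspace euclidean" by simp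
    fix U :: "int set"
    show "openin M.mtopology {l \<in> topspace M.mtopology. wn l n \<in> U}"
      unfolding M.openin_mtopology
    proof (intro conjI allI impI)
      show "{l \<in> topspace M.mtopology. wn l n \<in> U} \<subseteq> loops_at torus_inf (\<lambda>n. x)" by auto
      fix l assume "l \<in> {l \<in> topspace M.mtopology. wn l n \<in> U}"
      then have l: "l \<in> loops_at torus_inf (\<lambda>n. x)" and lU: "wn l n \<in> U" by auto
      define r where "r = (1/2::real)^(to_nat n) / 2"
      have r0: "r > 0" by (simp add: r_def)
      have "M.mball l r \<subseteq> {l \<in> topspace M.mtopology. wn l n \<in> U}"
      proof
        fix m assume "m \<in> M.mball l r"
        then have m: "m \<in> loops_at torus_inf (\<lambda>n. x)" and d: "loop_dist l m < r" by auto
        note L = loop_coord[OF l const_torus[OF x], where n=n]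
        note Mm = loop_coord[OF m const_torus[OF x], where n=n]
        have "norm (m t n - l t n) < norm (l t n - 0)" if t: "t \<in> {0..1}" for t
        proof -
          have "(1/2::real)^(to_nat n) * min (dist (l t n) (m t n)) 1 \<le> dist (l t) (m t)"
            by (rule dist_fun_ge_coord)
          also have "\<dots> \<le> loop_dist l m" by (rule ld_ge[OF t])
          also have "\<dots> < (1/2::real)^(to_nat n) * (1/2)" using d by (simp add: r_def)
          finally have "min (dist (l t n) (m t n)) 1 < 1/2" by simp
          then have "dist (l t n) (m t n) < 1/2" by linarith
          then show ?thesis using L(3)[of t] by (simp add: dist_norm norm_minus_commute)
        qed
        then have "winding_number (\<lambda>s. m s n) 0 = winding_number (\<lambda>s. l s n) 0"
          using L Mm by (intro winding_number_nearby_loops_eq) auto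
        then have "wn m n = wn l n"
          using wn_int[OF l const_torus[OF x], where n=n] wn_int[OF m const_torus[OF x], where n=n] by simp
        then show "m \<in> {l \<in> topspace M.mtopology. wn l n \<in> U}" using m lU by simp
      qed
      then show "\<exists>r>0. M.mball l r \<subseteq> {l \<in> topspace M.mtopology. wn l n \<in> U}" using r0 by blast
    qed
  qed
  then show ?thesis
    unfolding loop_space_def euclidean_product_topology[symmetric] continuous_map_componentwise_UNIV
    by simp
qed

lemma cont_g:
  assumes x: "x \<in> sphere 0 1"
  shows "continuous_map (euclidean :: (nat \<Rightarrow> int) topology) (loop_space torus_inf (\<lambda>n. x)) (std_loop x)"
proof -
  interpret M: Metric_space "loops_at torus_inf (\<lambda>n. x)" loop_dist by (rule ld_metric)
  show ?thesis
    unfolding continuous_map_def loop_space_def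
  proof (intro conjI allI impI)
    show "std_loop x \<in> topspace euclidean \<rightarrow> topspace M.mtopology" using std_in[OF x] by simp
    fix U assume U: "openin M.mtopology U"
    have "open {v. std_loop x v \<in> U}"
    proof (subst open_subopen, intro ballI)
      fix v assume "v \<in> {v. std_loop x v \<in> U}"
      then have vU: "std_loop x v \<in> U" by simp
      then obtain r where r: "r > 0" "M.mball (std_loop x v) r \<subseteq> U"
        using U unfolding M.openin_mtopology by blast
      obtain N where N: "(1/2::real)^N < r" using real_arch_pow_inv[OF r(1), of "1/2"] by auto
      define T where "T = (\<Inter>k\<in>{..N}. (\<lambda>w::nat\<Rightarrow>int. w (from_nat k)) -` {v (from_nat k)})"
      have "open T" unfolding T_def
        by (intro open_INT finite_atMost ballI open_vimage) (auto intro: open_discrete)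
      moreover have "v \<in> T" by (simp add: T_def)
      moreover have "T \<subseteq> {v. std_loop x v \<in> U}"
      proof
        fix w assume w: "w \<in> T"
        have "loop_dist (std_loop x v) (std_loop x w) \<le> (1/2)^N"
        proof (rule ld_le)
          fix s :: real assume s: "s \<in> {0..1}"
          have z: "dist (std_loop x v s (from_nat n)) (std_loop x w s (from_nat n)) = 0" if "n \<le> N" for n
            using w s that by (simp add: T_def std_loop_def)
          have "{dist (std_loop x v s (from_nat n)) (std_loop x w s (from_nat n)) |n. n \<le> N} = {0}"
            using z z[of 0] by force
          then show "dist (std_loop x v s) (std_loop x w s) \<le> (1/2)^N"
            using dist_fun_le_dist_first_terms[of "std_loop x v s" "std_loop x w s" N] by simp
        qed
        then have "std_loop x w \<in> M.mball (std_loop x v) r"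
          using N std_in[OF x] by auto
        then show "w \<in> {v. std_loop x v \<in> U}" using r(2) by auto
      qed
      ultimately show "\<exists>T. open T \<and> v \<in> T \<and> T \<subseteq> {v. std_loop x v \<in> U}" by blast
    qed
    then show "openin euclidean {v \<in> topspace euclidean. std_loop x v \<in> U}" by simp
  qed
qed


theorem lemma5p1:
  fixes GammaL :: "(real \<Rightarrow> nat \<Rightarrow> complex) set set"
    and GammaZ :: "(nat \<Rightarrow> int) set set"
    and x :: complex and G :: "(nat \<Rightarrow> int) set"
  defines "TL \<equiv> loop_space torus_inf (\<lambda>n. x)"
      and "TZ \<equiv> (euclidean :: (nat \<Rightarrow> int) topology)"
  assumes "preimage_closed TL TL GammaL GammaL"
      and "preimage_closed TL TZ GammaL GammaZ"
      and "preimage_closed TZ TL GammaZ GammaL"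
      and "preimage_closed TZ TZ GammaZ GammaZ"
      and "x \<in> sphere 0 1"
      and "int_seq_subgroup G"
  shows "G \<in> GammaZ \<longleftrightarrow>
         {l \<in> loops_at torus_inf (\<lambda>n. x).
            \<exists>v\<in>G. homotopic_loops torus_inf l (std_loop x v)} \<in> GammaL"
proof -
  have x: "x \<in> sphere 0 1" by fact
  have pLZ: "preimage_closed TL TZ GammaL GammaZ" by fact
  have pZL: "preimage_closed TZ TL GammaZ GammaL" by fact
  interpret M: Metric_space "loops_at torus_inf (\<lambda>n. x)" loop_dist by (rule ld_metric)
  have topL: "topspace TL = loops_at torus_inf (\<lambda>n. x)"
    by (simp add: TL_def loop_space_def)
  let ?LG = "{l \<in> loops_at torus_inf (\<lambda>n. x). \<exists>v\<in>G. homotopic_loops torus_inf l (std_loop x v)}"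
  have A: "{p \<in> topspace TL. (\<lambda>n. wn p n) \<in> G} = ?LG"
  proof -
    have "(\<lambda>n. wn l n) \<in> G \<longleftrightarrow> (\<exists>v\<in>G. homotopic_loops torus_inf l (std_loop x v))"
      if l: "l \<in> loops_at torus_inf (\<lambda>n. x)" for l
    proof -
      have "(\<exists>v\<in>G. homotopic_loops torus_inf l (std_loop x v)) \<longleftrightarrow> (\<exists>v\<in>G. \<forall>n. wn l n = v n)"
        using hom_iff[OF x l] by simp
      also have "\<dots> \<longleftrightarrow> (\<lambda>n. wn l n) \<in> G"
      proof
        assume "\<exists>v\<in>G. \<forall>n. wn l n = v n"
        then obtain v where "v \<in> G" "\<forall>n. wn l n = v n" by blast
        then have "(\<lambda>n. wn l n) = v" by (simp add: fun_eq_iff)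
        then show "(\<lambda>n. wn l n) \<in> G" using \<open>v \<in> G\<close> by simp
      qed blast
      finally show ?thesis by simp
    qed
    then show ?thesis using topL by auto
  qed
  have B: "{v \<in> topspace TZ. std_loop x v \<in> ?LG} = G"
  proof -
    have "std_loop x v \<in> ?LG \<longleftrightarrow> v \<in> G" for v
    proof -
      have "std_loop x v \<in> ?LG \<longleftrightarrow> (\<exists>w\<in>G. \<forall>n. wn (std_loop x v) n = w n)"
        using hom_iff[OF x std_in[OF x]] std_in[OF x] by simp
      also have "\<dots> \<longleftrightarrow> (\<exists>w\<in>G. \<forall>n. v n = w n)" by (simp add: wn_std[OF x])
      also have "\<dots> \<longleftrightarrow> v \<in> G"
      proof
        assume "\<exists>w\<in>G. \<forall>n. v n = w n"
        then obtain w where "w \<in> G" "\<forall>n. v n = w n" by blast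
        then have "v = w" by (simp add: fun_eq_iff)
        then show "v \<in> G" using \<open>w \<in> G\<close> by simp
      qed blast
      finally show ?thesis .
    qed
    then show ?thesis by (auto simp: TZ_def)
  qed
  show ?thesis
  proof
    assume "G \<in> GammaZ"
    then have "{p \<in> topspace TL. (\<lambda>n. wn p n) \<in> G} \<in> GammaL"
      using pLZ cont_f[OF x] unfolding preimage_closed_def TL_def TZ_def by (elim allE impE ballE) auto
    then show "?LG \<in> GammaL" using A by simp
  next
    assume "?LG \<in> GammaL"
    then have "{v \<in> topspace TZ. std_loop x v \<in> ?LG} \<in> GammaZ"
      using pZL cont_g[OF x] unfolding preimage_closed_def TL_def TZ_def by (elim allE impE ballE) auto
    then show "G \<in> GammaZ" using B by simp
  qed
qed

end
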